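(* Let $A_i\in\mathbb{R}^{n\times n}$, $i\ge -1$, be entrywise nonnegative matrices such that $A=\sum_{i=-1}^{\infty}A_i$ is irreducible and row stochastic. Assume that the series $\sum_{i=-1}^\infty iA_i$ converges and that $\eta=\mathbf v^T\mathbf w<0$, where $\mathbf v>0$ is the unique vector with $\mathbf v^TA=\mathbf v^T$, $\mathbf v^T\mathbf e=1$, and $\mathbf w=\sum_{i=-1}^\infty iA_i\mathbf e$. Let $G$ be the componentwise minimal nonnegative solution of $X=\sum_{i=-1}^{\infty}A_iX^{i+1}$. Let $X_0$ be a row stochastic matrix and define, for $k\ge 0$, \[ (I_n-A_0)Y_k=A_{-1}+\sum_{i=1}^{\infty}A_iX_k^{i+1},\qquad X_{k+1}=Y_k+(I_n-A_0)^{-1}A_1\,(Y_k^2-X_k^2). \] Then the sequence $\{X_k\}_{k\in\mathbb N}$ converges to $G$.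
   Context: $\mathbf e$ denotes the all-ones column vector; a (row) stochastic matrix is an entrywise nonnegative matrix $S$ with $S\mathbf e=\mathbf e$. Inequalities between matrices are entrywise. Under the assumptions, $I_n-A_0$ is a nonsingular M-matrix and the minimal nonnegative solution $G$ exists. *)

theory Defs
  imports "HOL-Analysis.Analysis"
begin

text \<open>Matrix power with respect to matrix multiplication (the ring structure on
  vec is componentwise, so we define it explicitly).\<close>
primrec mpow :: "real^'n^'n \<Rightarrow> nat \<Rightarrow> real^'n^'n" where
  "mpow M 0 = mat 1"
| "mpow M (Suc k) = M ** mpow M k"

definition nonneg_mat :: "real^'n^'m \<Rightarrow> bool" where
  "nonneg_mat M \<longleftrightarrow> (\<forall>i j. M $ i $ j \<ge> 0)"

definition stochastic :: "real^'n^'n \<Rightarrow> bool" where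
  "stochastic M \<longleftrightarrow> nonneg_mat M \<and> M *v (\<chi> i. 1) = (\<chi> i. 1)"

definition irreducible_mat :: "real^'n^'n \<Rightarrow> bool" where
  "irreducible_mat M \<longleftrightarrow> (\<forall>i j. \<exists>k. mpow M k $ i $ j > 0)"

definition mat_le :: "real^'n^'m \<Rightarrow> real^'n^'m \<Rightarrow> bool" where
  "mat_le M N \<longleftrightarrow> (\<forall>i j. M $ i $ j \<le> N $ i $ j)"

text \<open>A i is the coefficient A_i for i \<ge> -1. X solves X = sum_{i\<ge>-1} A_i X^(i+1).\<close>
definition solves_eq :: "(int \<Rightarrow> real^'n^'n) \<Rightarrow> real^'n^'n \<Rightarrow> bool" where
  "solves_eq A X \<longleftrightarrow> summable (\<lambda>k. A (int k - 1) ** mpow X k)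
      \<and> X = (\<Sum>k. A (int k - 1) ** mpow X k)"

definition minimal_nonneg_solution :: "(int \<Rightarrow> real^'n^'n) \<Rightarrow> real^'n^'n \<Rightarrow> bool" where
  "minimal_nonneg_solution A G \<longleftrightarrow> nonneg_mat G \<and> solves_eq A G
      \<and> (\<forall>X. nonneg_mat X \<and> solves_eq A X \<longrightarrow> mat_le G X)"

end

theory Submission
  imports Defs
begin

lemma vec_sums_iff:
  fixes f :: "nat \<Rightarrow> 'a::real_normed_vector^'n"
  shows "(f sums s) \<longleftrightarrow> (\<forall>i. (\<lambda>k. f k $ i) sums (s $ i))"
proof
  assume "f sums s" then show "\<forall>i. (\<lambda>k. f k $ i) sums (s $ i)"
    unfolding sums_def by (auto dest: tendsto_vec_nth)
next
  assume H: "\<forall>i. (\<lambda>k. f k $ i) sums (s $ i)"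
  show "f sums s" unfolding sums_def
  proof (rule vec_tendstoI)
    fix i
    show "((\<lambda>n. sum f {..<n} $ i) \<longlongrightarrow> s $ i) sequentially"
      using H unfolding sums_def by (simp add: sum_component)
  qed
qed

lemma mat_sums_iff:
  fixes f :: "nat \<Rightarrow> real^'m^'n"
  shows "(f sums S) \<longleftrightarrow> (\<forall>i j. (\<lambda>k. f k $ i $ j) sums (S $ i $ j))"
  by (simp add: vec_sums_iff)

lemma mat_summable_iff:
  fixes f :: "nat \<Rightarrow> real^'m^'n"
  shows "summable f \<longleftrightarrow> (\<forall>i j. summable (\<lambda>k. f k $ i $ j))"
proof
  assume "summable f" then show "\<forall>i j. summable (\<lambda>k. f k $ i $ j)"
    by (simp add: summable_vec_nth)
next
  assume H: "\<forall>i j. summable (\<lambda>k. f k $ i $ j)"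
  have "f sums (\<chi> i j. suminf (\<lambda>k. f k $ i $ j))"
    unfolding mat_sums_iff using H by (simp add: summable_sums)
  then show "summable f" by (auto simp: summable_def)
qed

lemma mat_suminf_nth:
  fixes f :: "nat \<Rightarrow> real^'m^'n"
  assumes "summable f"
  shows "suminf f $ i $ j = (\<Sum>k. f k $ i $ j)"
  using assms mat_sums_iff sums_unique summable_sums by metis

lemma sums_mult_right_mat:
  fixes f :: "nat \<Rightarrow> real^'m^'n" and B :: "real^'p^'m"
  assumes "f sums S"
  shows "(\<lambda>k. f k ** B) sums (S ** B)"
  unfolding mat_sums_iff matrix_matrix_mult_def
proof (intro allI)
  fix i j
  have "\<And>l. (\<lambda>k. f k $ i $ l * B $ l $ j) sums (S $ i $ l * B $ l $ j)"
    using assms unfolding mat_sums_iff by (intro sums_mult2) auto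
  then show "(\<lambda>k. (\<chi> i j. \<Sum>l\<in>UNIV. f k $ i $ l * B $ l $ j) $ i $ j) sums
     ((\<chi> i j. \<Sum>l\<in>UNIV. S $ i $ l * B $ l $ j) $ i $ j)"
    by (simp add: sums_sum)
qed

lemma sums_mult_left_mat:
  fixes f :: "nat \<Rightarrow> real^'p^'m" and B :: "real^'m^'n"
  assumes "f sums S"
  shows "(\<lambda>k. B ** f k) sums (B ** S)"
  unfolding mat_sums_iff matrix_matrix_mult_def
proof (intro allI)
  fix i j
  have "\<And>l. (\<lambda>k. B $ i $ l * f k $ l $ j) sums (B $ i $ l * S $ l $ j)"
    using assms unfolding mat_sums_iff by (intro sums_mult) auto
  then show "(\<lambda>k. (\<chi> i j. \<Sum>l\<in>UNIV. B $ i $ l * f k $ l $ j) $ i $ j) sums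
     ((\<chi> i j. \<Sum>l\<in>UNIV. B $ i $ l * S $ l $ j) $ i $ j)"
    by (simp add: sums_sum)
qed

lemma sums_mult_vec:
  fixes f :: "nat \<Rightarrow> real^'m^'n" and x :: "real^'m"
  assumes "f sums S"
  shows "(\<lambda>k. f k *v x) sums (S *v x)"
  unfolding vec_sums_iff matrix_vector_mult_def
proof (intro allI)
  fix i
  have "\<And>l. (\<lambda>k. f k $ i $ l * x $ l) sums (S $ i $ l * x $ l)"
    using assms unfolding mat_sums_iff by (intro sums_mult2) auto
  then show "(\<lambda>k. (\<chi> i. \<Sum>l\<in>UNIV. f k $ i $ l * x $ l) $ i) sums
     ((\<chi> i. \<Sum>l\<in>UNIV. S $ i $ l * x $ l) $ i)"
    by (simp add: sums_sum)
qed

lemma mpow_add: "mpow M (a + b) = mpow M a ** mpow M b"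
  by (induction a) (auto simp: matrix_mul_assoc)

lemma mpow_Suc': "mpow M (Suc k) = mpow M k ** M"
  using mpow_add[of M k 1] by simp

lemma nonneg_mult: "nonneg_mat A \<Longrightarrow> nonneg_mat B \<Longrightarrow> nonneg_mat (A ** B)"
  unfolding nonneg_mat_def matrix_matrix_mult_def by (auto intro: sum_nonneg)

lemma nonneg_mat1: "nonneg_mat (mat 1 :: real^'n^'n)"
  unfolding nonneg_mat_def mat_def by auto

lemma nonneg_mpow: "nonneg_mat M \<Longrightarrow> nonneg_mat (mpow M k)"
  by (induction k) (auto simp: nonneg_mat1 nonneg_mult)

lemma mat_le_mult:
  assumes "nonneg_mat A" "mat_le A A'" "nonneg_mat B" "mat_le B B'"
  shows "mat_le (A ** B) (A' ** B')"
  using assms unfolding nonneg_mat_def mat_le_def matrix_matrix_mult_def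
  by (auto intro!: sum_mono mult_mono) (meson order_trans)

lemma mat_le_refl: "mat_le A A" by (simp add: mat_le_def)
lemma mat_le_trans: "mat_le A B \<Longrightarrow> mat_le B C \<Longrightarrow> mat_le A C"
  unfolding mat_le_def by (meson order_trans)

lemma mat_le_mpow:
  assumes "nonneg_mat A" "mat_le A B"
  shows "mat_le (mpow A k) (mpow B k)"
proof (induction k)
  case 0 then show ?case by (simp add: mat_le_refl)
next
  case (Suc k) then show ?case
    using assms by (simp add: mat_le_mult nonneg_mpow)
qed


lemma closure_univ:
  fixes P :: "real^'n^'n"
  assumes irr: "irreducible_mat P" and nn: "nonneg_mat P"
    and j0: "j0 \<in> J" and cl: "\<And>j l. j \<in> J \<Longrightarrow> P $ j $ l > 0 \<Longrightarrow> l \<in> J"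
  shows "J = UNIV"
proof -
  have key: "\<And>j l. j \<in> J \<Longrightarrow> mpow P k $ j $ l > 0 \<Longrightarrow> l \<in> J" for k
  proof (induction k)
    case 0 then show ?case by (auto simp: mat_def split: if_splits)
  next
    case (Suc k)
    fix j l assume jJ: "j \<in> J" and pos: "mpow P (Suc k) $ j $ l > 0"
    have "(\<Sum>m\<in>UNIV. P $ j $ m * mpow P k $ m $ l) > 0"
      using pos by (simp add: matrix_matrix_mult_def)
    then obtain m where "P $ j $ m * mpow P k $ m $ l > 0"
      by (metis (no_types, lifting) not_le sum_nonpos)
    moreover have "P $ j $ m \<ge> 0" "mpow P k $ m $ l \<ge> 0"
      using nn nonneg_mpow[OF nn] unfolding nonneg_mat_def by auto
    ultimately have "P $ j $ m > 0" "mpow P k $ m $ l > 0"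
      by (auto simp: zero_less_mult_iff)
    then show "l \<in> J" using Suc.IH cl jJ by blast
  qed
  show ?thesis
  proof (rule set_eqI, rule iffI)
    fix l
    obtain k where "mpow P k $ j0 $ l > 0" using irr unfolding irreducible_mat_def by blast
    then show "l \<in> J" using key j0 by blast
  qed simp
qed

lemma exists_min: "\<exists>j. \<forall>l. (f :: 'n::finite \<Rightarrow> real) j \<le> f l"
proof -
  have "Min (range f) \<in> range f" by (rule Min_in) auto
  then obtain j where "f j = Min (range f)" by (metis imageE)
  moreover have "Min (range f) \<le> f l" for l by (rule Min_le) auto
  ultimately show ?thesis by metis
qed

lemma vm_scale: "((c::real) *\<^sub>R y) v* (P::real^'n^'n) = c *\<^sub>R (y v* P)"
  by (simp add: vector_matrix_mult_def vec_eq_iff sum_distrib_left mult.commute mult.left_commute)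

lemma lyap_gen:
  fixes P :: "real^'n^'n" and w :: "real^'n"
  assumes irr: "irreducible_mat P" and P_nonneg: "nonneg_mat P"
    and drift: "\<forall>v :: real^'n. (\<forall>i. v $ i > 0) \<and> v v* P = v
                  \<and> sum (\<lambda>i. v $ i) UNIV = 1 \<longrightarrow> v \<bullet> w < 0"
  shows "\<exists>a. \<forall>j. (P *v a - a + w) $ j < 0"
proof (rule ccontr)
  assume H: "\<not> (\<exists>a. \<forall>j. (P *v a - a + w) $ j < 0)"
  define K where "K = {P *v a - a + w + p | a p. \<forall>j. 0 < p $ j}"
  have K0: "0 \<notin> K"
  proof
    assume "0 \<in> K"
    then obtain a p where p: "\<forall>j. 0 < p $ j" and eq: "0 = P *v a - a + w + p"
      unfolding K_def by blast
    have "\<forall>j. (P *v a - a + w) $ j < 0"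
    proof
      fix j
      have "(P *v a - a + w) $ j = - p $ j" using eq by (simp add: vec_eq_iff algebra_simps)
      then show "(P *v a - a + w) $ j < 0" using p by simp
    qed
    then show False using H by blast
  qed
  have Kc: "convex K"
    unfolding convex_def
  proof (intro ballI allI impI)
    fix x y and u v :: real
    assume "x \<in> K" "y \<in> K" and uv: "0 \<le> u" "0 \<le> v" "u + v = 1"
    then obtain a1 p1 a2 p2 where p1: "\<forall>j. 0 < p1 $ j" and x: "x = P *v a1 - a1 + w + p1"
      and p2: "\<forall>j. 0 < p2 $ j" and y: "y = P *v a2 - a2 + w + p2"
      unfolding K_def by blast
    have ww: "u *\<^sub>R w + v *\<^sub>R w = w" using uv by (simp add: scaleR_left_distrib[symmetric])
    have "u *\<^sub>R x + v *\<^sub>R y = P *v (u *\<^sub>R a1 + v *\<^sub>R a2) - (u *\<^sub>R a1 + v *\<^sub>R a2) + (u *\<^sub>R w + v *\<^sub>R w) + (u *\<^sub>R p1 + v *\<^sub>R p2)"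
      unfolding x y by (simp add: matrix_vector_right_distrib matrix_vector_mult_scaleR algebra_simps)
    also have "\<dots> = P *v (u *\<^sub>R a1 + v *\<^sub>R a2) - (u *\<^sub>R a1 + v *\<^sub>R a2) + w + (u *\<^sub>R p1 + v *\<^sub>R p2)"
      using ww by simp
    finally have eq: "u *\<^sub>R x + v *\<^sub>R y = \<dots>" .
    have "\<forall>j. 0 < (u *\<^sub>R p1 + v *\<^sub>R p2) $ j"
    proof
      fix j
      show "0 < (u *\<^sub>R p1 + v *\<^sub>R p2) $ j"
      proof (cases "u = 0")
        case True then show ?thesis using uv p2 by simp
      next
        case False then have "u > 0" using uv by simp
        then have "0 < u * p1 $ j" using p1 by simp
        moreover have "0 \<le> v * p2 $ j" using uv p2 by (simp add: less_imp_le)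
        ultimately show ?thesis by simp
      qed
    qed
    then show "u *\<^sub>R x + v *\<^sub>R y \<in> K" unfolding K_def using eq by blast
  qed
  obtain y where y0: "y \<noteq> 0" and yK: "\<forall>x\<in>K. 0 \<le> inner y x"
    using separating_hyperplane_set_0[OF Kc K0] by blast
  have key: "0 \<le> y \<bullet> (P *v a) - y \<bullet> a + y \<bullet> w + y \<bullet> p" if "\<forall>j. 0 < p $ j" for a p
  proof -
    have "P *v a - a + w + p \<in> K" unfolding K_def using that by blast
    then have "0 \<le> y \<bullet> (P *v a - a + w + p)" using yK by blast
    then show ?thesis by (simp only: inner_add_right inner_diff_right)
  qed
  define e :: "real^'n" where "e = (\<chi> i. 1)"
  have epos: "\<forall>j. 0 < e $ j" by (simp add: e_def)
  have g0: "y \<bullet> (P *v x) - y \<bullet> x = 0" for x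
  proof (rule ccontr)
    define g where "g = y \<bullet> (P *v x) - y \<bullet> x"
    define c where "c = y \<bullet> w + y \<bullet> e"
    assume "y \<bullet> (P *v x) - y \<bullet> x \<noteq> 0"
    then have gn: "g \<noteq> 0" unfolding g_def .
    define t where "t = - (\<bar>c\<bar> + 1) / g"
    have "0 \<le> y \<bullet> (P *v (t *\<^sub>R x)) - y \<bullet> (t *\<^sub>R x) + y \<bullet> w + y \<bullet> e"
      by (rule key[OF epos])
    also have "\<dots> = t * g + c"
      by (simp only: g_def c_def matrix_vector_mult_scaleR inner_scaleR_right right_diff_distrib add.assoc)
    also have "\<dots> = - (\<bar>c\<bar> + 1) + c" using gn by (simp add: t_def)
    finally show False by linarith
  qed
  have stat: "y v* P = y"
  proof -
    have "(y v* P - y) \<bullet> x = 0" for x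
      using g0[of x] by (simp add: inner_diff_left dot_lmul_matrix)
    then have "(y v* P - y) \<bullet> (y v* P - y) = 0" by blast
    then show ?thesis by simp
  qed
  have ynn: "y $ l \<ge> 0" for l
  proof (rule ccontr)
    assume neg: "\<not> y $ l \<ge> 0"
    define c where "c = y \<bullet> w + y \<bullet> e"
    define t where "t = (\<bar>c\<bar> + 1) / (- y $ l)"
    have "- y $ l > 0" using neg by simp
    then have tpos: "t > 0" unfolding t_def by (intro divide_pos_pos) auto
    define p :: "real^'n" where "p = e + t *\<^sub>R axis l 1"
    have pp: "\<forall>j. 0 < p $ j"
    proof
      fix j show "0 < p $ j" using tpos by (simp add: p_def e_def axis_def)
    qed
    have "0 \<le> y \<bullet> (P *v 0) - y \<bullet> 0 + y \<bullet> w + y \<bullet> p" by (rule key[OF pp])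
    also have "y \<bullet> p = y \<bullet> e + t * y $ l"
      by (simp add: p_def inner_add_right inner_axis)
    finally have "0 \<le> c + t * y $ l" by (simp add: c_def)
    moreover have "t * y $ l = - (\<bar>c\<bar> + 1)" using neg by (simp add: t_def)
    ultimately show False by linarith
  qed
  have yw: "y \<bullet> w \<ge> 0"
  proof (rule ccontr)
    assume neg: "\<not> y \<bullet> w \<ge> 0"
    define t where "t = - (y \<bullet> w) / (\<bar>y \<bullet> e\<bar> + 1)"
    have "- (y \<bullet> w) > 0" "\<bar>y \<bullet> e\<bar> + 1 > 0" using neg by auto
    then have tpos: "t > 0" unfolding t_def by (intro divide_pos_pos)
    have pp: "\<forall>j. 0 < (t *\<^sub>R e) $ j" using tpos by (simp add: e_def)
    have "0 \<le> y \<bullet> (P *v 0) - y \<bullet> 0 + y \<bullet> w + y \<bullet> (t *\<^sub>R e)" by (rule key[OF pp])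
    then have "0 \<le> y \<bullet> w + t * (y \<bullet> e)" by simp
    moreover have "t * (y \<bullet> e) \<le> t * \<bar>y \<bullet> e\<bar>" using tpos by (simp add: mult_left_mono)
    moreover have "t * \<bar>y \<bullet> e\<bar> < - (y \<bullet> w)"
    proof -
      have "t * (\<bar>y \<bullet> e\<bar> + 1) = - (y \<bullet> w)" by (simp add: t_def)
      then show ?thesis using tpos by (simp add: algebra_simps)
    qed
    ultimately show False by linarith
  qed
  obtain j0 where j0: "y $ j0 \<noteq> 0" using y0 by (metis vec_eq_iff zero_index)
  have ypos: "{j. y $ j > 0} = UNIV"
  proof (rule closure_univ[OF irr P_nonneg])
    show "j0 \<in> {j. y $ j > 0}" using j0 ynn[of j0] by simp
  next
    fix j l assume jJ: "j \<in> {j. y $ j > 0}" and pjl: "P $ j $ l > 0"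
    have "y $ l = (y v* P) $ l" using stat by simp
    also have "\<dots> = (\<Sum>i\<in>UNIV. y $ i * P $ i $ l)" by (simp add: vector_matrix_mult_def)
    also have "\<dots> \<ge> y $ j * P $ j $ l"
      by (rule member_le_sum) (use P_nonneg ynn in \<open>auto simp: nonneg_mat_def\<close>)
    finally show "l \<in> {j. y $ j > 0}" using jJ pjl by (smt (verit) mem_Collect_eq mult_pos_pos)
  qed
  define s where "s = sum (\<lambda>i. y $ i) UNIV"
  have yp: "\<forall>i. y $ i > 0" using ypos by (auto simp: set_eq_iff)
  have spos: "s > 0" unfolding s_def using yp by (intro sum_pos) auto
  define v where "v = (1 / s) *\<^sub>R y"
  have v1: "\<forall>i. v $ i > 0" using yp spos by (simp add: v_def)
  have v2: "v v* P = v" using stat by (simp add: v_def vm_scale)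
  have v3: "sum (\<lambda>i. v $ i) UNIV = 1" using spos
    by (simp add: v_def sum_divide_distrib[symmetric] s_def)
  have "(\<forall>i. v $ i > 0) \<and> v v* P = v \<and> sum (\<lambda>i. v $ i) UNIV = 1"
    using v1 v2 v3 by blast
  then have "v \<bullet> w < 0" using drift by blast
  moreover have "v \<bullet> w = (1 / s) * (y \<bullet> w)" by (simp add: v_def)
  ultimately show False using yw spos by (simp add: divide_less_0_iff zero_le_mult_iff)
qed


lemma mm_add_r: "((A::real^'m^'n) + B) ** (C::real^'p^'m) = A ** C + B ** C"
  by (simp add: vec_eq_iff matrix_matrix_mult_def sum.distrib distrib_right)
lemma mm_diff_l: "(A::real^'m^'n) ** ((B::real^'p^'m) - C) = A ** B - A ** C"
  by (simp add: vec_eq_iff matrix_matrix_mult_def sum_subtractf right_diff_distrib)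
lemma mm_diff_r: "((A::real^'m^'n) - B) ** (C::real^'p^'m) = A ** C - B ** C"
  by (simp add: vec_eq_iff matrix_matrix_mult_def sum_subtractf left_diff_distrib)

lemma dom_summable:
  fixes f g :: "nat \<Rightarrow> real^'m^'n"
  assumes b: "\<And>k. nonneg_mat (f k)" "\<And>k. mat_le (f k) (g k)" and g: "summable g"
  shows "summable f \<and> mat_le (suminf f) (suminf g)"
proof -
  have fs: "summable (\<lambda>k. f k $ i $ j)" for i j
  proof (rule summable_comparison_test'[of "\<lambda>k. g k $ i $ j"])
    show "summable (\<lambda>k. g k $ i $ j)" using g mat_summable_iff by blast
    fix k show "norm (f k $ i $ j) \<le> g k $ i $ j"
      using b[of k] unfolding nonneg_mat_def mat_le_def by simp
  qed
  then have f: "summable f" using mat_summable_iff by blast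
  moreover have "mat_le (suminf f) (suminf g)"
    unfolding mat_le_def
  proof (intro allI)
    fix i j
    have "(\<Sum>k. f k $ i $ j) \<le> (\<Sum>k. g k $ i $ j)"
      by (rule suminf_le) (use b fs summable_vec_nth[OF summable_vec_nth[OF g]] in \<open>auto simp: mat_le_def\<close>)
    then show "suminf f $ i $ j \<le> suminf g $ i $ j"
      using mat_suminf_nth[OF f] mat_suminf_nth[OF g] by simp
  qed
  ultimately show ?thesis by blast
qed

lemma suminf_nonneg_mat:
  fixes f :: "nat \<Rightarrow> real^'m^'n"
  assumes "\<And>k. nonneg_mat (f k)" "summable f"
  shows "nonneg_mat (suminf f)"
  unfolding nonneg_mat_def
proof (intro allI)
  fix i j
  have "0 \<le> (\<Sum>k. f k $ i $ j)"
    by (rule suminf_nonneg) (use assms summable_vec_nth[OF summable_vec_nth[OF assms(2)]] in \<open>auto simp: nonneg_mat_def\<close>)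
  then show "0 \<le> suminf f $ i $ j" using mat_suminf_nth[OF assms(2)] by simp
qed

lemma nonneg_add: "nonneg_mat A \<Longrightarrow> nonneg_mat B \<Longrightarrow> nonneg_mat (A + B)"
  unfolding nonneg_mat_def by simp

lemma mat_le_add: "mat_le A A' \<Longrightarrow> mat_le B B' \<Longrightarrow> mat_le (A + B) (A' + B')"
  unfolding mat_le_def by (simp add: add_mono)

lemma stoch_mult: "stochastic A \<Longrightarrow> stochastic B \<Longrightarrow> stochastic (A ** B)"
  unfolding stochastic_def by (simp add: nonneg_mult matrix_vector_mul_assoc[symmetric])

lemma stoch_mpow: "stochastic A \<Longrightarrow> stochastic (mpow A k)"
proof (induction k)
  case 0 then show ?case by (simp add: stochastic_def nonneg_mat1)
next
  case (Suc k) then show ?case by (simp add: stoch_mult)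
qed

lemma stoch_le1: "stochastic M \<Longrightarrow> M $ i $ j \<le> 1"
proof -
  assume st: "stochastic M"
  then have "(M *v (\<chi> i. 1)) $ i = 1" unfolding stochastic_def by simp
  then have "(\<Sum>l\<in>UNIV. M $ i $ l) = 1" by (simp add: matrix_vector_mult_def)
  moreover have "M $ i $ j \<le> (\<Sum>l\<in>UNIV. M $ i $ l)"
    by (rule member_le_sum) (use st in \<open>auto simp: stochastic_def nonneg_mat_def\<close>)
  ultimately show ?thesis by simp
qed

lemma tendsto_mat_mult:
  fixes f :: "'b \<Rightarrow> real^'m^'n" and g :: "'b \<Rightarrow> real^'p^'m"
  assumes "(f \<longlongrightarrow> a) F" "(g \<longlongrightarrow> b) F"
  shows "((\<lambda>x. f x ** g x) \<longlongrightarrow> a ** b) F"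
  unfolding matrix_matrix_mult_def
  by (intro tendsto_vec_lambda tendsto_sum tendsto_mult tendsto_vec_nth assms)

lemma tendsto_mpow:
  fixes f :: "'b \<Rightarrow> real^'n^'n"
  assumes "(f \<longlongrightarrow> a) F"
  shows "((\<lambda>x. mpow (f x) k) \<longlongrightarrow> mpow a k) F"
  by (induction k) (auto intro: tendsto_mat_mult assms)


lemma scaleR_mv: "((c::real) *\<^sub>R (M::real^'m^'n)) *v x = c *\<^sub>R (M *v x)"
  by (simp add: matrix_vector_mult_def vec_eq_iff sum_distrib_left mult.assoc)

lemma mv_comp: "((M::real^'m^'n) *v x) $ j = (\<Sum>l\<in>UNIV. M $ j $ l * x $ l)"
  by (simp add: matrix_vector_mult_def)

locale mg1 =
  fixes A :: "int \<Rightarrow> real^'n^'n"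
  assumes nonneg: "\<And>i. i \<ge> -1 \<Longrightarrow> nonneg_mat (A i)"
    and summ: "summable (\<lambda>k. A (int k - 1))"
    and irr: "irreducible_mat (\<Sum>k. A (int k - 1))"
    and stoch: "stochastic (\<Sum>k. A (int k - 1))"
    and summ_drift: "summable (\<lambda>k. of_int (int k - 1) *\<^sub>R A (int k - 1))"
    and drift: "\<forall>v :: real^'n. (\<forall>i. v $ i > 0) \<and> v v* (\<Sum>k. A (int k - 1)) = v
                  \<and> sum (\<lambda>i. v $ i) UNIV = 1
                \<longrightarrow> v \<bullet> ((\<Sum>k. of_int (int k - 1) *\<^sub>R A (int k - 1)) *v (\<chi> i. 1)) < 0"
begin

abbreviation "P \<equiv> (\<Sum>k. A (int k - 1))"
abbreviation "e \<equiv> (\<chi> i. 1) :: real^'n"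
abbreviation "w \<equiv> (\<Sum>k. of_int (int k - 1) *\<^sub>R A (int k - 1)) *v e"

lemma S_nonneg: "nonneg_mat (A (int k - 1))"
  using nonneg by simp

lemma P_nonneg: "nonneg_mat P"
  unfolding nonneg_mat_def
proof (intro allI)
  fix i j
  have s: "(\<lambda>k. A (int k - 1) $ i $ j) sums (P $ i $ j)"
    using mat_sums_iff[THEN iffD1, OF summable_sums[OF summ]] by blast
  have "\<And>k. 0 \<le> A (int k - 1) $ i $ j" using S_nonneg unfolding nonneg_mat_def by blast
  from sums_le[OF this sums_zero s] show "P $ i $ j \<ge> 0" .
qed

lemma lyap: "\<exists>a. \<forall>j. (P *v a - a + w) $ j < 0"
  using lyap_gen[OF irr P_nonneg drift] .


lemma S_entry_nonneg: "0 \<le> A (int k - 1) $ i $ j"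
  using S_nonneg unfolding nonneg_mat_def by blast

lemma A_entry_nonneg: "i \<ge> -1 \<Longrightarrow> 0 \<le> A i $ r $ c"
  using nonneg unfolding nonneg_mat_def by blast

lemma Pe: "P *v e = e"
  using stoch unfolding stochastic_def by blast

lemma rowsum: "(\<lambda>k. (A (int k - 1) *v e) $ j) sums 1"
proof -
  have "(\<lambda>k. A (int k - 1) *v e) sums (P *v e)"
    by (rule sums_mult_vec[OF summable_sums[OF summ]])
  then have "(\<lambda>k. A (int k - 1) *v e) sums e" using Pe by simp
  from vec_sums_iff[THEN iffD1, OF this, rule_format, of j] show ?thesis by simp
qed

lemma row_eq: "(M *v e) $ j = (\<Sum>l\<in>UNIV. M $ j $ l)"
  by (simp add: matrix_vector_mult_def)

lemma row_nonneg: "0 \<le> (A (int k - 1) *v e) $ j"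
  unfolding row_eq by (rule sum_nonneg) (simp add: S_entry_nonneg)

lemma row_le1: "(A (int k - 1) *v e) $ j \<le> 1"
proof -
  have "sum (\<lambda>k. (A (int k - 1) *v e) $ j) {k} \<le> (\<Sum>k. (A (int k - 1) *v e) $ j)"
    by (rule sum_le_suminf) (use rowsum[of j] row_nonneg in \<open>auto simp: sums_iff\<close>)
  then show ?thesis using rowsum[of j] by (simp add: sums_iff)
qed

lemma row_full:
  assumes r1: "(A 0 *v e) $ j = 1" and k1: "k \<noteq> 1"
  shows "A (int k - 1) $ j $ l = 0"
proof -
  let ?f = "\<lambda>k. (A (int k - 1) *v e) $ j"
  have "sum ?f {1, k} \<le> suminf ?f"
    by (rule sum_le_suminf) (use rowsum[of j] row_nonneg in \<open>auto simp: sums_iff\<close>)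
  then have "1 + ?f k \<le> 1" using rowsum[of j] r1 k1 by (simp add: sums_iff)
  then have fk: "?f k = 0" using row_nonneg[of k j] by simp
  have "(\<Sum>l\<in>UNIV. A (int k - 1) $ j $ l) = 0" using fk by (simp add: row_eq)
  then show ?thesis using S_entry_nonneg
    by (simp add: sum_nonneg_eq_0_iff)
qed

lemma P_entry_full:
  assumes r1: "(A 0 *v e) $ j = 1"
  shows "P $ j $ l = A 0 $ j $ l"
proof -
  have s: "(\<lambda>k. A (int k - 1) $ j $ l) sums (P $ j $ l)"
    using mat_sums_iff[THEN iffD1, OF summable_sums[OF summ]] by blast
  have "(\<lambda>k. A (int k - 1) $ j $ l) = (\<lambda>k. if k = 1 then A 0 $ j $ l else 0)"
    using row_full[OF r1] by (auto simp: fun_eq_iff)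
  moreover have "(\<lambda>k. if k = 1 then A 0 $ j $ l else 0) sums (A 0 $ j $ l)"
    using sums_single[of 1 "\<lambda>k. A 0 $ j $ l"] by simp
  ultimately have "(\<lambda>k. A (int k - 1) $ j $ l) sums (A 0 $ j $ l)" by simp
  then show ?thesis using s sums_unique2 by fastforce
qed

lemma w_zero_if_full:
  assumes "\<forall>j. (A 0 *v e) $ j = 1"
  shows "w = 0"
proof -
  have "(\<lambda>k. of_int (int k - 1) *\<^sub>R A (int k - 1)) = (\<lambda>k. 0)"
  proof
    fix k
    show "of_int (int k - 1) *\<^sub>R A (int k - 1) = 0"
    proof (cases "k = 1")
      case True then show ?thesis by simp
    next
      case False then show ?thesis using row_full assms by (simp add: vec_eq_iff)
    qed
  qed
  then show ?thesis by simp
qed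

lemma no_full: "\<not> (\<forall>j. (A 0 *v e) $ j = 1)"
proof
  assume full: "\<forall>j. (A 0 *v e) $ j = 1"
  obtain a where a: "\<forall>j. (P *v a - a + w) $ j < 0" using lyap by blast
  have a': "\<forall>j. (P *v a) $ j < a $ j" using a w_zero_if_full[OF full] by simp
  obtain j where amin: "\<And>l. a $ j \<le> a $ l" using exists_min by blast
  have "(P *v a) $ j = (\<Sum>l\<in>UNIV. P $ j $ l * a $ l)" by (simp add: matrix_vector_mult_def)
  also have "\<dots> \<ge> (\<Sum>l\<in>UNIV. P $ j $ l * a $ j)"
    by (rule sum_mono) (use P_nonneg amin in \<open>auto simp: nonneg_mat_def intro: mult_left_mono\<close>)
  also have "(\<Sum>l\<in>UNIV. P $ j $ l * a $ j) = (P *v e) $ j * a $ j"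
    by (simp add: row_eq sum_distrib_right)
  finally have "(P *v a) $ j \<ge> a $ j" using Pe by simp
  then show False using a' by (meson not_le)
qed

lemma inv_pos:
  assumes b: "\<forall>j. ((mat 1 - A 0) *v x) $ j \<ge> 0"
  shows "x $ j \<ge> 0"
proof (rule ccontr)
  assume "\<not> x $ j \<ge> 0"
  obtain j0 where j0m: "\<And>l. x $ j0 \<le> x $ l" using exists_min by blast
  define m where "m = x $ j0"
  have mle: "m \<le> x $ l" for l unfolding m_def by (rule j0m)
  have mneg: "m < 0" using mle[of j] \<open>\<not> x $ j \<ge> 0\<close> by simp
  have j0: "x $ j0 = m" by (simp add: m_def)
  define J where "J = {j. x $ j = m}"
  have props: "(A 0 *v e) $ i = 1 \<and> (\<forall>l. A 0 $ i $ l > 0 \<longrightarrow> x $ l = m)" if iJ: "i \<in> J" for i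
  proof -
    have xi: "x $ i = m" using iJ by (simp add: J_def)
    define r where "r = (A 0 *v e) $ i"
    have r1: "r \<le> 1" using row_le1[of 1 i] by (simp add: r_def)
    define T where "T = (\<Sum>l\<in>UNIV. A 0 $ i $ l * (x $ l - m))"
    have Tn: "T \<ge> 0" unfolding T_def
      by (rule sum_nonneg) (use A_entry_nonneg[of 0] mle in \<open>auto\<close>)
    have Ax: "(A 0 *v x) $ i = T + m * r"
      by (simp add: T_def r_def matrix_vector_mult_def row_eq algebra_simps sum_subtractf sum_distrib_left)
    have "((mat 1 - A 0) *v x) $ i = x $ i - (A 0 *v x) $ i"
      by (simp add: matrix_vector_mult_diff_rdistrib)
    then have "m - (T + m * r) \<ge> 0" using b[rule_format, of i] xi Ax by simp
    moreover have "m * r \<ge> m" using r1 mneg by (simp add: mult_le_cancel_left1)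
    ultimately have T0: "T = 0" and mr: "m * r = m" using Tn by linarith+
    have "r = 1" using mr mneg by simp
    moreover have "\<forall>l. A 0 $ i $ l > 0 \<longrightarrow> x $ l = m"
    proof (intro allI impI)
      fix l assume pos: "A 0 $ i $ l > 0"
      have "\<forall>l\<in>UNIV. A 0 $ i $ l * (x $ l - m) = 0"
        using T0 unfolding T_def
        by (subst sum_nonneg_eq_0_iff[symmetric]) (use A_entry_nonneg[of 0] mle in \<open>auto\<close>)
      then show "x $ l = m" using pos by (metis UNIV_I less_numeral_extra(3) mult_eq_0_iff right_minus_eq)
    qed
    ultimately show ?thesis by (simp add: r_def)
  qed
  have "J = UNIV"
  proof (rule closure_univ[OF irr P_nonneg])
    show "j0 \<in> J" using j0 by (simp add: J_def)
  next
    fix i l assume iJ: "i \<in> J" and pil: "P $ i $ l > 0"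
    have "P $ i $ l = A 0 $ i $ l" using props[OF iJ] P_entry_full by blast
    then show "l \<in> J" using props[OF iJ] pil by (simp add: J_def)
  qed
  then have "\<forall>i. (A 0 *v e) $ i = 1" using props by blast
  then show False using no_full by blast
qed


lemma inj0: assumes "(mat 1 - A 0) *v x = 0" shows "x = 0"
proof -
  have "(mat 1 - A 0) *v (- x) = - ((mat 1 - A 0) *v x)"
    by (simp add: matrix_vector_mult_def vec_eq_iff sum_negf)
  then have "(mat 1 - A 0) *v (- x) = 0" using assms by simp
  then have "\<forall>j. x $ j \<ge> 0" "\<forall>j. (- x) $ j \<ge> 0"
    using inv_pos[of x] inv_pos[of "- x"] assms by auto
  then show ?thesis by (simp add: vec_eq_iff order_antisym)
qed

lemma inv_ex: "invertible (mat 1 - A 0)"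
  unfolding invertible_left_inverse matrix_left_invertible_ker using inj0 by blast

definition "Minv = matrix_inv (mat 1 - A 0)"

lemma Minv_lr: "Minv ** (mat 1 - A 0) = mat 1 \<and> (mat 1 - A 0) ** Minv = mat 1"
proof -
  have "\<exists>B. (mat 1 - A 0) ** B = mat 1 \<and> B ** (mat 1 - A 0) = mat 1"
    using inv_ex unfolding invertible_def by blast
  then have "(mat 1 - A 0) ** Minv = mat 1 \<and> Minv ** (mat 1 - A 0) = mat 1"
    unfolding Minv_def matrix_inv_def by (rule someI_ex)
  then show ?thesis by blast
qed

lemma Minv_l: "Minv ** (mat 1 - A 0) = mat 1" using Minv_lr by blast
lemma Minv_r: "(mat 1 - A 0) ** Minv = mat 1" using Minv_lr by blast

lemma Minv_nonneg: "nonneg_mat Minv"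
  unfolding nonneg_mat_def
proof (intro allI)
  fix i j
  define x where "x = Minv *v axis j 1"
  have "(mat 1 - A 0) *v x = axis j 1"
    unfolding x_def by (simp add: matrix_vector_mul_assoc Minv_r)
  then have "\<forall>l. ((mat 1 - A 0) *v x) $ l \<ge> 0" by (simp add: axis_def)
  then have "x $ i \<ge> 0" by (rule inv_pos)
  moreover have "x $ i = Minv $ i $ j"
    unfolding x_def by (simp add: matrix_vector_mult_def axis_def if_distrib cong: if_cong)
  ultimately show "0 \<le> Minv $ i $ j" by simp
qed

definition "R X = (\<Sum>j. A (int j + 1) ** mpow X (j + 2))"
definition "R2 X = (\<Sum>j. A (int j + 2) ** mpow X (j + 3))"
definition "Q U V = Minv ** (A (-1) + A 1 ** (U ** U) + R2 V)"
definition "F X = Minv ** (A (-1) + R X)"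
definition "good X \<longleftrightarrow> nonneg_mat X \<and> summable (\<lambda>k. A (int k - 1) ** mpow X k)"

lemma term_nonneg: "nonneg_mat X \<Longrightarrow> nonneg_mat (A (int k - 1) ** mpow X k)"
  by (simp add: nonneg_mult nonneg_mpow S_nonneg)

lemma term_le: "nonneg_mat X \<Longrightarrow> mat_le X X' \<Longrightarrow> mat_le (A (int k - 1) ** mpow X k) (A (int k - 1) ** mpow X' k)"
  by (simp add: mat_le_mult nonneg_mpow S_nonneg mat_le_mpow mat_le_refl)

lemma good_mono:
  assumes "good X'" "nonneg_mat X" "mat_le X X'"
  shows "good X \<and> mat_le (\<Sum>k. A (int k - 1) ** mpow X k) (\<Sum>k. A (int k - 1) ** mpow X' k)"
proof -
  have s': "summable (\<lambda>k. A (int k - 1) ** mpow X' k)" using assms(1) good_def by blast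
  have "summable (\<lambda>k. A (int k - 1) ** mpow X k) \<and> mat_le (\<Sum>k. A (int k - 1) ** mpow X k) (\<Sum>k. A (int k - 1) ** mpow X' k)"
    by (rule dom_summable[OF term_nonneg[OF assms(2)] term_le[OF assms(2,3)] s'])
  then show ?thesis using assms(2) good_def by blast
qed

lemma good_stoch:
  assumes st: "stochastic X" shows "good X"
proof -
  define E :: "real^'n^'n" where "E = (\<chi> i j. 1)"
  have "summable (\<lambda>k. A (int k - 1) ** E)"
    using sums_mult_right_mat[OF summable_sums[OF summ]] by (auto simp: summable_def)
  moreover have le: "mat_le (A (int k - 1) ** mpow X k) (A (int k - 1) ** E)" for k
    using stoch_le1[OF stoch_mpow[OF st]]
    by (intro mat_le_mult) (auto simp: S_nonneg mat_le_def E_def nonneg_mpow st[unfolded stochastic_def])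
  moreover have Xn: "nonneg_mat X" using st unfolding stochastic_def by blast
  ultimately have "summable (\<lambda>k. A (int k - 1) ** mpow X k)"
    using dom_summable[of "\<lambda>k. A (int k - 1) ** mpow X k" "\<lambda>k. A (int k - 1) ** E"] term_nonneg[OF Xn] le
    by blast
  then show ?thesis using st unfolding good_def stochastic_def by blast
qed

lemma shift2: "(\<lambda>j. A (int (j + 2) - 1) ** mpow X (j + 2)) = (\<lambda>j. A (int j + 1) ** mpow X (j + 2))"
  by (simp add: algebra_simps)
lemma shift3: "(\<lambda>j. A (int (j + 3) - 1) ** mpow X (j + 3)) = (\<lambda>j. A (int j + 2) ** mpow X (j + 3))"
  by (simp add: algebra_simps)

lemma series_split:
  assumes g: "good X"
  shows "(\<Sum>k. A (int k - 1) ** mpow X k) = A (-1) + A 0 ** X + R X"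
    and "summable (\<lambda>j. A (int j + 1) ** mpow X (j + 2))"
proof -
  have s: "summable (\<lambda>k. A (int k - 1) ** mpow X k)" using g good_def by blast
  show "summable (\<lambda>j. A (int j + 1) ** mpow X (j + 2))"
    using s summable_iff_shift[of "\<lambda>k. A (int k - 1) ** mpow X k" 2] shift2 by simp
  have "(\<Sum>k. A (int k - 1) ** mpow X k) = (\<Sum>j. A (int (j + 2) - 1) ** mpow X (j + 2)) + (\<Sum>i<2. A (int i - 1) ** mpow X i)"
    by (rule suminf_split_initial_segment[OF s])
  also have "\<dots> = R X + (A (-1) + A 0 ** X)"
    unfolding shift2 R_def by (simp add: numeral_2_eq_2)
  finally show "(\<Sum>k. A (int k - 1) ** mpow X k) = A (-1) + A 0 ** X + R X" by simp
qed

lemma R_split: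
  assumes g: "good X"
  shows "R X = A 1 ** (X ** X) + R2 X"
    and "summable (\<lambda>j. A (int j + 2) ** mpow X (j + 3))"
proof -
  have s: "summable (\<lambda>k. A (int k - 1) ** mpow X k)" using g good_def by blast
  show s3: "summable (\<lambda>j. A (int j + 2) ** mpow X (j + 3))"
    using s summable_iff_shift[of "\<lambda>k. A (int k - 1) ** mpow X k" 3] shift3 by simp
  have s2: "summable (\<lambda>j. A (int j + 1) ** mpow X (j + 2))" by (rule series_split(2)[OF g])
  have "R X = (\<Sum>j. A (int (Suc j) + 1) ** mpow X (Suc j + 2)) + A (int 0 + 1) ** mpow X (0 + 2)"
    unfolding R_def using suminf_split_head[OF s2] by simp
  also have "(\<lambda>j. A (int (Suc j) + 1) ** mpow X (Suc j + 2)) = (\<lambda>j. A (int j + 2) ** mpow X (j + 3))"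
    by (simp add: algebra_simps numeral_3_eq_3)
  finally show "R X = A 1 ** (X ** X) + R2 X"
    unfolding R2_def by (simp add: numeral_2_eq_2 add.commute)
qed

lemma R2_mono:
  assumes g: "good X'" and n: "nonneg_mat X" and le: "mat_le X X'"
  shows "mat_le (R2 X) (R2 X') \<and> nonneg_mat (R2 X)"
proof -
  have gX: "good X" using good_mono[OF g n le] by blast
  have t: "nonneg_mat (A (int j + 2) ** mpow X (j + 3))" for j
    using term_nonneg[OF n, of "j + 3"] shift3[of X] by (metis (no_types, lifting))
  have t2: "mat_le (A (int j + 2) ** mpow X (j + 3)) (A (int j + 2) ** mpow X' (j + 3))" for j
    using term_le[OF n le, of "j + 3"] shift3 by (metis (no_types, lifting))
  show ?thesis
    using dom_summable[OF t t2 R_split(2)[OF g]] suminf_nonneg_mat[OF t R_split(2)[OF gX]]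
    unfolding R2_def by blast
qed

lemma F_eq_Q: "good X \<Longrightarrow> F X = Q X X"
  unfolding F_def Q_def using R_split(1) by (simp add: add.assoc)

lemma Q_mono:
  assumes g: "good V'" and U: "nonneg_mat U" "mat_le U U'" and V: "nonneg_mat V" "mat_le V V'"
  shows "mat_le (Q U V) (Q U' V') \<and> nonneg_mat (Q U V)"
proof -
  have r: "mat_le (R2 V) (R2 V') \<and> nonneg_mat (R2 V)" by (rule R2_mono[OF g V])
  have A1: "nonneg_mat (A 1)" "nonneg_mat (A (-1))" using nonneg by auto
  have UU: "mat_le (U ** U) (U' ** U')" "nonneg_mat (U ** U)"
    using U by (auto intro: mat_le_mult nonneg_mult)
  have "mat_le (A 1 ** (U ** U)) (A 1 ** (U' ** U'))"
    by (rule mat_le_mult[OF A1(1) mat_le_refl UU(2) UU(1)])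
  then have inner: "mat_le (A (-1) + A 1 ** (U ** U) + R2 V) (A (-1) + A 1 ** (U' ** U') + R2 V')"
    using r by (intro mat_le_add mat_le_refl) auto
  have innern: "nonneg_mat (A (-1) + A 1 ** (U ** U) + R2 V)"
    using nonneg_add[OF nonneg_add[OF A1(2) nonneg_mult[OF A1(1) UU(2)]] r[THEN conjunct2]] .
  show ?thesis unfolding Q_def
    using inner innern Minv_nonneg by (auto intro: mat_le_mult nonneg_mult simp: mat_le_refl)
qed

lemma Phi_eq:
  assumes g: "good X"
  shows "F X + Minv ** A 1 ** (F X ** F X - X ** X) = Q (F X) X"
proof -
  have "F X = Minv ** (A (-1) + A 1 ** (X ** X) + R2 X)" using F_eq_Q[OF g] Q_def by simp
  then show ?thesis
    unfolding Q_def
    by (simp add: matrix_add_ldistrib mm_diff_l matrix_mul_assoc)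
qed

lemma solves_iff:
  assumes g: "good X"
  shows "solves_eq A X \<longleftrightarrow> X = F X"
proof -
  have s: "summable (\<lambda>k. A (int k - 1) ** mpow X k)" using g good_def by blast
  have IX: "(mat 1 - A 0) ** X = X - A 0 ** X" by (simp add: mm_diff_r)
  have "solves_eq A X \<longleftrightarrow> X = A (-1) + A 0 ** X + R X"
    unfolding solves_eq_def using s series_split(1)[OF g] by simp
  also have "\<dots> \<longleftrightarrow> (mat 1 - A 0) ** X = A (-1) + R X"
    unfolding IX by (auto simp: algebra_simps)
  also have "\<dots> \<longleftrightarrow> X = F X"
  proof
    assume h: "(mat 1 - A 0) ** X = A (-1) + R X"
    have "X = Minv ** ((mat 1 - A 0) ** X)" by (simp add: matrix_mul_assoc Minv_l)
    then show "X = F X" unfolding F_def using h by simp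
  next
    assume h: "X = F X"
    have "(mat 1 - A 0) ** F X = A (-1) + R X"
      unfolding F_def by (simp add: matrix_mul_assoc Minv_r)
    then show "(mat 1 - A 0) ** X = A (-1) + R X" using h by simp
  qed
  finally show ?thesis .
qed

lemma F_stoch:
  assumes st: "stochastic X"
  shows "stochastic (F X)"
proof -
  have g: "good X" by (rule good_stoch[OF st])
  have Xe: "X *v e = e" using st unfolding stochastic_def by simp
  have "(\<lambda>k. (A (int k - 1) ** mpow X k) *v e) sums ((\<Sum>k. A (int k - 1) ** mpow X k) *v e)"
    using sums_mult_vec[OF summable_sums[OF g[unfolded good_def, THEN conjunct2]]] .
  moreover have "(A (int k - 1) ** mpow X k) *v e = A (int k - 1) *v e" for k
    using stoch_mpow[OF st, of k] by (simp add: matrix_vector_mul_assoc[symmetric] stochastic_def)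
  ultimately have "(\<lambda>k. A (int k - 1) *v e) sums ((\<Sum>k. A (int k - 1) ** mpow X k) *v e)" by simp
  moreover have "(\<lambda>k. A (int k - 1) *v e) sums (P *v e)"
    by (rule sums_mult_vec[OF summable_sums[OF summ]])
  ultimately have "(\<Sum>k. A (int k - 1) ** mpow X k) *v e = P *v e" by (rule sums_unique2)
  then have "(A (-1) + A 0 ** X + R X) *v e = e" using series_split(1)[OF g] Pe by simp
  moreover have "(A (-1) + A 0 ** X + R X) *v e = (A (-1) + R X) *v e + A 0 *v e"
    by (simp add: matrix_vector_mult_add_rdistrib matrix_vector_mul_assoc[symmetric] Xe)
  moreover have "(mat 1 - A 0) *v e = e - A 0 *v e" by (simp add: matrix_vector_mult_diff_rdistrib)
  ultimately have B: "(A (-1) + R X) *v e = (mat 1 - A 0) *v e" by (simp add: algebra_simps)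
  have "F X *v e = Minv *v ((mat 1 - A 0) *v e)"
    unfolding F_def by (simp add: matrix_vector_mul_assoc[symmetric] B)
  also have "\<dots> = e" by (simp add: matrix_vector_mul_assoc Minv_l)
  finally have "F X *v e = e" .
  moreover have "nonneg_mat (F X)"
  proof -
    have Xn: "nonneg_mat X" using st unfolding stochastic_def by blast
    have "nonneg_mat (Q X X)" using Q_mono[OF g Xn mat_le_refl Xn mat_le_refl] by blast
    then show ?thesis using F_eq_Q[OF g] by simp
  qed
  ultimately show ?thesis unfolding stochastic_def by simp
qed


lemma sol_rowsum_ge:
  assumes Hn: "nonneg_mat H" and Hs: "solves_eq A H"
  shows "(H *v e) $ j \<ge> 1"
proof -
  obtain a where a: "\<forall>j. (P *v a - a + w) $ j < 0" using lyap by blast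
  define d where "d l = - (P *v a - a + w) $ l" for l
  have dpos: "d l > 0" for l unfolding d_def using a[rule_format, of l] by linarith
  obtain jm where jm: "\<And>l. a $ jm \<le> a $ l" using exists_min by blast
  define u where "u n = mpow H n *v e" for n
  have sH: "(\<lambda>k. A (int k - 1) ** mpow H k) sums H"
    using Hs unfolding solves_eq_def by (metis summable_sums)
  have harm: "(\<lambda>k. (A (int k - 1) *v u (k + m)) $ l) sums (u (Suc m) $ l)" for m l
  proof -
    have "(\<lambda>k. (A (int k - 1) ** mpow H k) *v u m) sums (H *v u m)"
      by (rule sums_mult_vec[OF sH])
    moreover have "(A (int k - 1) ** mpow H k) *v u m = A (int k - 1) *v u (k + m)" for k
      by (simp add: u_def matrix_vector_mul_assoc mpow_add matrix_mul_assoc)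
    moreover have "H *v u m = u (Suc m)" by (simp add: u_def matrix_vector_mul_assoc)
    ultimately have "(\<lambda>k. A (int k - 1) *v u (k + m)) sums u (Suc m)" by simp
    then show ?thesis by (rule vec_sums_iff[THEN iffD1, rule_format])
  qed
  have drs: "(\<lambda>k. of_int (int k - 1) * (A (int k - 1) *v e) $ l) sums (w $ l)" for l
  proof -
    have "(\<lambda>k. (of_int (int k - 1) *\<^sub>R A (int k - 1)) *v e) sums w"
      by (rule sums_mult_vec[OF summable_sums[OF summ_drift]])
    then have "(\<lambda>k. of_int (int k - 1) *\<^sub>R (A (int k - 1) *v e)) sums w" by (simp add: scaleR_mv)
    from vec_sums_iff[THEN iffD1, rule_format, OF this, of l] show ?thesis by simp
  qed
  have las: "(\<lambda>k. (A (int k - 1) *v a) $ l) sums ((P *v a) $ l)" for l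
  proof -
    have "(\<lambda>k. A (int k - 1) *v a) sums (P *v a)"
      by (rule sums_mult_vec[OF summable_sums[OF summ]])
    then show ?thesis by (rule vec_sums_iff[THEN iffD1, rule_format])
  qed
  have unn: "u n $ l \<ge> 0" for n l
    unfolding u_def mv_comp using nonneg_mpow[OF Hn, of n]
    by (intro sum_nonneg) (simp add: nonneg_mat_def)
  have u0: "u 0 = e" by (simp add: u_def)
  have u1: "u 1 = H *v e" by (simp add: u_def)
  have main: "1 - (H *v e) $ j \<le> \<epsilon> * (1 + a $ j - a $ jm)" if epos: "\<epsilon> > 0" for \<epsilon>
  proof -
    define h where "h n l = (1 - u n $ l) - \<epsilon> * (real n + a $ l)" for n l
    define hv where "hv n = (\<chi> l. h n l)" for n
    have hv_eq: "hv n = e - u n - (\<epsilon> * real n) *\<^sub>R e - \<epsilon> *\<^sub>R a" for n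
      by (simp add: hv_def h_def vec_eq_iff algebra_simps)
    have hsum: "(\<lambda>k. (A (int k - 1) *v hv (k + m)) $ l) sums (h (Suc m) l + \<epsilon> * d l)" for m l
    proof -
      have eqk: "(A (int k - 1) *v hv (k + m)) $ l =
          (A (int k - 1) *v e) $ l - (A (int k - 1) *v u (k + m)) $ l
          - (\<epsilon> * (real m + 1)) * (A (int k - 1) *v e) $ l
          - \<epsilon> * (of_int (int k - 1) * (A (int k - 1) *v e) $ l)
          - \<epsilon> * (A (int k - 1) *v a) $ l" for k
      proof -
        have "real (k + m) = (real m + 1) + of_int (int k - 1)" by simp
        then show ?thesis
          unfolding hv_eq by (simp add: matrix_vector_mult_diff_distrib matrix_vector_mult_scaleR algebra_simps)
      qed
      have "(\<lambda>k. (A (int k - 1) *v e) $ l - (A (int k - 1) *v u (k + m)) $ l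
          - (\<epsilon> * (real m + 1)) * (A (int k - 1) *v e) $ l
          - \<epsilon> * (of_int (int k - 1) * (A (int k - 1) *v e) $ l)
          - \<epsilon> * (A (int k - 1) *v a) $ l)
          sums (1 - u (Suc m) $ l - (\<epsilon> * (real m + 1)) * 1 - \<epsilon> * w $ l - \<epsilon> * (P *v a) $ l)"
        by (intro sums_diff sums_mult rowsum harm drs las)
      moreover have "1 - u (Suc m) $ l - (\<epsilon> * (real m + 1)) * 1 - \<epsilon> * w $ l - \<epsilon> * (P *v a) $ l
          = h (Suc m) l + \<epsilon> * d l"
        by (simp add: h_def d_def algebra_simps)
      ultimately show ?thesis unfolding eqk by simp
    qed
    have hle: "h n l \<le> 1 - \<epsilon> * (real n + a $ l)" for n l using unn[of n l] by (simp add: h_def)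
    have h0: "h 0 l = - \<epsilon> * a $ l" for l by (simp add: h_def u0)
    define N where "N = nat \<lceil>1 / \<epsilon>\<rceil>"
    have big: "h n l < h 0 jm" if "n > N" for n l
    proof -
      have "real n > 1 / \<epsilon>" using that unfolding N_def by linarith
      then have "\<epsilon> * real n > 1" using epos by (simp add: field_simps)
      moreover have "\<epsilon> * a $ jm \<le> \<epsilon> * a $ l" using jm epos by simp
      ultimately show ?thesis using hle[of n l] h0[of jm] by (simp add: algebra_simps)
    qed
    define HS where "HS = (\<lambda>(n, l). h n l) ` ({..N} \<times> UNIV)"
    have HSf: "finite HS" unfolding HS_def by simp
    have HSne: "HS \<noteq> {}" unfolding HS_def by simp
    define Mx where "Mx = Max HS"
    have allle: "h n l \<le> Mx" for n l
    proof (cases "n \<le> N")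
      case True
      then have "h n l \<in> HS" unfolding HS_def by force
      then show ?thesis unfolding Mx_def using HSf by simp
    next
      case False
      have "h 0 jm \<in> HS" unfolding HS_def by force
      then have "h 0 jm \<le> Mx" unfolding Mx_def using HSf by simp
      then show ?thesis using big[of n l] False by simp
    qed
    obtain n0 l0 where n0: "h n0 l0 = Mx"
    proof -
      have "Mx \<in> HS" unfolding Mx_def using HSf HSne by simp
      then show ?thesis using that unfolding HS_def by auto
    qed
    have "n0 = 0"
    proof (rule ccontr)
      assume "n0 \<noteq> 0"
      then obtain m where m: "n0 = Suc m" by (cases n0) auto
      have msum: "(\<lambda>k. Mx * (A (int k - 1) *v e) $ l0) sums (Mx * 1)"
        by (intro sums_mult rowsum)
      have bnd: "(A (int k - 1) *v hv (k + m)) $ l0 \<le> Mx * (A (int k - 1) *v e) $ l0" for k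
      proof -
        have "(A (int k - 1) *v hv (k + m)) $ l0 = (\<Sum>l\<in>UNIV. A (int k - 1) $ l0 $ l * h (k + m) l)"
          by (simp add: mv_comp hv_def)
        also have "\<dots> \<le> (\<Sum>l\<in>UNIV. A (int k - 1) $ l0 $ l * Mx)"
          by (intro sum_mono mult_left_mono allle S_entry_nonneg)
        also have "\<dots> = Mx * (A (int k - 1) *v e) $ l0"
          by (simp add: mv_comp sum_distrib_left mult.commute)
        finally show ?thesis .
      qed
      have "h (Suc m) l0 + \<epsilon> * d l0 \<le> Mx * 1"
        by (rule sums_le[OF bnd hsum[of m l0] msum])
      moreover have "\<epsilon> * d l0 > 0" using epos dpos by simp
      ultimately show False using n0 m by simp
    qed
    then have "Mx = - \<epsilon> * a $ l0" using n0 h0 by simp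
    also have "\<dots> \<le> - \<epsilon> * a $ jm" using jm epos by simp
    finally have "h 1 j \<le> - \<epsilon> * a $ jm" using allle[of 1 j] by simp
    then show ?thesis using u1 by (simp add: h_def algebra_simps)
  qed
  show ?thesis
  proof (rule ccontr)
    assume "\<not> 1 \<le> (H *v e) $ j"
    then have t: "1 - (H *v e) $ j > 0" by simp
    define C where "C = 1 + a $ j - a $ jm"
    have C: "C > 0" using jm[of j] by (simp add: C_def)
    define \<epsilon> where "\<epsilon> = (1 - (H *v e) $ j) / (2 * C)"
    have ep: "\<epsilon> > 0" using t C by (simp add: \<epsilon>_def)
    have "1 - (H *v e) $ j \<le> \<epsilon> * C" using main[OF ep] by (simp add: C_def)
    also have "\<epsilon> * C = (1 - (H *v e) $ j) / 2" using C by (simp add: \<epsilon>_def)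
    finally show False using t by simp
  qed
qed


lemma F_mono:
  assumes g: "good X'" and n: "nonneg_mat X" and le: "mat_le X X'"
  shows "mat_le (F X) (F X') \<and> nonneg_mat (F X)"
proof -
  have gX: "good X" using good_mono[OF g n le] by blast
  have "mat_le (Q X X) (Q X' X') \<and> nonneg_mat (Q X X)" by (rule Q_mono[OF g n le n le])
  then show ?thesis using F_eq_Q[OF g] F_eq_Q[OF gX] by simp
qed

lemma F_le_Phi:
  assumes g: "good X" and n: "nonneg_mat X" and le: "mat_le X (F X)"
  shows "mat_le (F X) (Q (F X) X)"
proof -
  have "mat_le (Q X X) (Q (F X) X) \<and> nonneg_mat (Q X X)" by (rule Q_mono[OF g n le n mat_le_refl])
  then show ?thesis using F_eq_Q[OF g] by simp
qed

lemma main_conv: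
  fixes G :: "real^'n^'n" and X Y :: "nat \<Rightarrow> real^'n^'n"
  assumes Gmin: "minimal_nonneg_solution A G"
    and X0: "stochastic (X 0)"
    and Ydef: "\<And>k. (mat 1 - A 0) ** Y k
                 = A (-1) + (\<Sum>j. A (int j + 1) ** mpow (X k) (j + 2))"
    and Xdef: "\<And>k. X (Suc k) = Y k + matrix_inv (mat 1 - A 0) ** A 1
                                   ** (Y k ** Y k - X k ** X k)"
  shows "X \<longlonglongrightarrow> G"
proof -
  have Gn: "nonneg_mat G" and Gs: "solves_eq A G"
    and Gm: "\<And>Z. nonneg_mat Z \<Longrightarrow> solves_eq A Z \<Longrightarrow> mat_le G Z"
    using Gmin unfolding minimal_nonneg_solution_def by auto
  have gG: "good G" using Gn Gs unfolding good_def solves_eq_def by blast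
  have FG: "F G = G" using Gs solves_iff[OF gG] by simp
  have Yk: "Y k = F (X k)" for k
  proof -
    have "Y k = Minv ** ((mat 1 - A 0) ** Y k)" by (simp add: matrix_mul_assoc Minv_l)
    then show ?thesis unfolding F_def R_def using Ydef[of k] by simp
  qed
  have Xk: "X (Suc k) = F (X k) + Minv ** A 1 ** (F (X k) ** F (X k) - X k ** X k)" for k
    using Xdef[of k] Yk[of k] by (simp add: Minv_def)
  have Xst: "stochastic (X k)" for k
  proof (induction k)
    case 0 then show ?case by (rule X0)
  next
    case (Suc k)
    have g: "good (X k)" by (rule good_stoch[OF Suc.IH])
    have Fst: "stochastic (F (X k))" by (rule F_stoch[OF Suc.IH])
    have Fe: "F (X k) *v e = e" and Xe: "X k *v e = e"
      using Fst Suc.IH unfolding stochastic_def by auto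
    have "(F (X k) ** F (X k) - X k ** X k) *v e = 0"
      by (simp add: matrix_vector_mult_diff_rdistrib matrix_vector_mul_assoc[symmetric] Fe Xe)
    then have "X (Suc k) *v e = e"
      unfolding Xk by (simp add: matrix_vector_mult_add_rdistrib matrix_vector_mul_assoc[symmetric] Fe)
    moreover have "nonneg_mat (X (Suc k))"
    proof -
      have Xn: "nonneg_mat (X k)" using Suc.IH stochastic_def by blast
      have Fn: "nonneg_mat (F (X k))" using Fst stochastic_def by blast
      have "nonneg_mat (Q (F (X k)) (X k))"
        using Q_mono[OF g Fn mat_le_refl Xn mat_le_refl] by blast
      then show ?thesis unfolding Xk Phi_eq[OF g] .
    qed
    ultimately show ?case unfolding stochastic_def by blast
  qed
  have gX: "good (X k)" for k by (rule good_stoch[OF Xst])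
  have XnK: "nonneg_mat (X k)" for k using Xst stochastic_def by blast
  have XQ: "X (Suc k) = Q (F (X k)) (X k)" for k unfolding Xk Phi_eq[OF gX] ..
  define Phi where "Phi Z = Q (F Z) Z" for Z
  define Z where "Z k = (Phi ^^ k) 0" for k
  have ZS: "Z (Suc k) = Q (F (Z k)) (Z k)" for k by (simp add: Z_def Phi_def)
  have Z0: "Z 0 = 0" by (simp add: Z_def)
  have zero_nn: "nonneg_mat (0::real^'n^'n)" by (simp add: nonneg_mat_def)
  have inv: "nonneg_mat (Z k) \<and> mat_le (Z k) G \<and> mat_le (Z k) (F (Z k)) \<and> mat_le (F (Z k)) (Z (Suc k))
      \<and> mat_le (Z k) (X k)" for k
  proof (induction k)
    case 0
    have g0: "good 0" using good_mono[OF gG zero_nn] Gn by (simp add: mat_le_def nonneg_mat_def)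
    have F0: "nonneg_mat (F 0)" using F_mono[OF gG zero_nn] Gn by (simp add: mat_le_def nonneg_mat_def)
    have "mat_le (F 0) (Q (F 0) 0)"
      by (rule F_le_Phi[OF g0 zero_nn]) (use F0 in \<open>simp add: mat_le_def nonneg_mat_def\<close>)
    then show ?case using F0 Gn XnK[of 0] by (simp add: Z0 ZS mat_le_def nonneg_mat_def)
  next
    case (Suc k)
    let ?z = "Z k" and ?z' = "Z (Suc k)"
    have zn: "nonneg_mat ?z" and zG: "mat_le ?z G" and zF: "mat_le ?z (F ?z)" and Fz: "mat_le (F ?z) ?z'"
      and zX: "mat_le ?z (X k)" using Suc.IH by auto
    have gz: "good ?z" using good_mono[OF gG zn zG] by blast
    have FzG: "mat_le (F ?z) G \<and> nonneg_mat (F ?z)" using F_mono[OF gG zn zG] FG by simp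
    have q1: "mat_le (Q (F ?z) ?z) (Q G G) \<and> nonneg_mat (Q (F ?z) ?z)"
      by (rule Q_mono[OF gG]) (use FzG zn zG in auto)
    have QG: "Q G G = G" using F_eq_Q[OF gG] FG by simp
    have z'n: "nonneg_mat ?z'" and z'G: "mat_le ?z' G" using q1 QG ZS[of k] by auto
    have gz': "good ?z'" using good_mono[OF gG z'n z'G] by blast
    have zz': "mat_le ?z ?z'" using zF Fz mat_le_trans by blast
    have q2: "mat_le (Q (F ?z) ?z) (Q ?z' ?z') \<and> nonneg_mat (Q (F ?z) ?z)"
      by (rule Q_mono[OF gz']) (use FzG zn Fz zz' in auto)
    have z'F: "mat_le ?z' (F ?z')" using q2 ZS[of k] F_eq_Q[OF gz'] by simp
    have Fz': "mat_le (F ?z') (Z (Suc (Suc k)))"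
      using F_le_Phi[OF gz' z'n z'F] ZS[of "Suc k"] by simp
    have FzX: "mat_le (F ?z) (F (X k))" using F_mono[OF gX zn zX] by blast
    have q3: "mat_le (Q (F ?z) ?z) (Q (F (X k)) (X k)) \<and> nonneg_mat (Q (F ?z) ?z)"
      by (rule Q_mono[OF gX]) (use FzG zn FzX zX in auto)
    have z'X: "mat_le ?z' (X (Suc k))" using q3 ZS[of k] XQ[of k] by simp
    show ?case using z'n z'G z'F Fz' z'X by blast
  qed
  have Zinc: "incseq (\<lambda>k. Z k $ i $ j)" for i j
  proof (rule incseq_SucI)
    fix k
    have "mat_le (Z k) (Z (Suc k))" using inv[of k] mat_le_trans by blast
    then show "Z k $ i $ j \<le> Z (Suc k) $ i $ j" by (simp add: mat_le_def)
  qed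
  have Zbdd: "bdd_above (range (\<lambda>k. Z k $ i $ j))" for i j
    using inv by (auto simp: mat_le_def intro!: bdd_aboveI[of _ "G $ i $ j"])
  define Zs where "Zs = (\<chi> i j. SUP k. Z k $ i $ j)"
  have Zlim_e: "(\<lambda>k. Z k $ i $ j) \<longlonglongrightarrow> Zs $ i $ j" for i j
    unfolding Zs_def using LIMSEQ_incseq_SUP[OF Zbdd Zinc] by simp
  have Zlim: "Z \<longlonglongrightarrow> Zs"
    by (intro vec_tendstoI) (use Zlim_e in simp)
  have Zsn: "nonneg_mat Zs" unfolding nonneg_mat_def
  proof (intro allI)
    fix i j show "0 \<le> Zs $ i $ j"
      by (rule LIMSEQ_le_const[OF Zlim_e]) (use inv in \<open>auto simp: nonneg_mat_def\<close>)
  qed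
  have ZsG: "mat_le Zs G" unfolding mat_le_def
  proof (intro allI)
    fix i j show "Zs $ i $ j \<le> G $ i $ j"
      by (rule LIMSEQ_le_const2[OF Zlim_e]) (use inv in \<open>auto simp: mat_le_def\<close>)
  qed
  have gZs: "good Zs" using good_mono[OF gG Zsn ZsG] by blast
  have gZ: "good (Z k)" for k using good_mono[OF gG] inv by blast
  have FZ1: "(\<lambda>k. F (Z k)) \<longlonglongrightarrow> Zs"
  proof (intro vec_tendstoI)
    fix i j
    have "(\<lambda>k. Z (Suc k) $ i $ j) \<longlonglongrightarrow> Zs $ i $ j"
      using LIMSEQ_Suc[OF Zlim_e[of i j]] .
    moreover have "\<forall>k. Z k $ i $ j \<le> F (Z k) $ i $ j" "\<forall>k. F (Z k) $ i $ j \<le> Z (Suc k) $ i $ j"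
      using inv by (auto simp: mat_le_def)
    ultimately show "(\<lambda>k. F (Z k) $ i $ j) \<longlonglongrightarrow> Zs $ i $ j"
      using real_tendsto_sandwich[of "\<lambda>k. Z k $ i $ j" "\<lambda>k. F (Z k) $ i $ j" sequentially
          "\<lambda>k. Z (Suc k) $ i $ j"] Zlim_e[of i j] by auto
  qed
  have RZ: "(\<lambda>k. R (Z k)) \<longlonglongrightarrow> R Zs"
  proof (intro vec_tendstoI)
    fix r c
    let ?a = "\<lambda>j k. (A (int j + 1) ** mpow (Z k) (j + 2)) $ r $ c"
    let ?b = "\<lambda>j. (A (int j + 1) ** mpow Zs (j + 2)) $ r $ c"
    let ?M = "\<lambda>j. (A (int j + 1) ** mpow G (j + 2)) $ r $ c"
    have lim: "(\<lambda>k. ?a j k) \<longlonglongrightarrow> ?b j" for j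
      by (intro tendsto_vec_nth tendsto_mat_mult tendsto_const tendsto_mpow Zlim)
    have bnd: "norm (?a j k) \<le> ?M j" for j k
    proof -
      have zn: "nonneg_mat (Z k)" and zG: "mat_le (Z k) G" using inv by auto
      have e1: "int (j + 2) - 1 = int j + 1" by simp
      have t1: "nonneg_mat (A (int j + 1) ** mpow (Z k) (j + 2))"
        using term_nonneg[OF zn, of "j + 2", unfolded e1] .
      have t2: "mat_le (A (int j + 1) ** mpow (Z k) (j + 2)) (A (int j + 1) ** mpow G (j + 2))"
        using term_le[OF zn zG, of "j + 2", unfolded e1] .
      have "0 \<le> ?a j k" using t1 unfolding nonneg_mat_def by blast
      moreover have "?a j k \<le> ?M j" using t2 unfolding mat_le_def by blast
      ultimately show ?thesis by simp
    qed
    have Ms: "summable ?M"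
      using summable_vec_nth[OF summable_vec_nth[OF series_split(2)[OF gG]]] .
    have T: "((\<lambda>k. \<Sum>j. ?a j k) \<longlonglongrightarrow> (\<Sum>j. ?b j))"
      using tannerys_theorem[of ?a ?b sequentially ?M] lim bnd Ms by (auto intro: always_eventually)
    have "(\<Sum>j. ?a j k) = R (Z k) $ r $ c" for k
      unfolding R_def using mat_suminf_nth[OF series_split(2)[OF gZ[of k]]] by simp
    moreover have "(\<Sum>j. ?b j) = R Zs $ r $ c"
      unfolding R_def using mat_suminf_nth[OF series_split(2)[OF gZs]] by simp
    ultimately show "(\<lambda>k. R (Z k) $ r $ c) \<longlonglongrightarrow> R Zs $ r $ c" using T by simp
  qed
  have FZ2: "(\<lambda>k. F (Z k)) \<longlonglongrightarrow> F Zs"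
    unfolding F_def by (intro tendsto_mat_mult tendsto_const tendsto_add RZ)
  have "Zs = F Zs" using LIMSEQ_unique[OF FZ1 FZ2] .
  then have "solves_eq A Zs" using solves_iff[OF gZs] by simp
  then have "mat_le G Zs" using Gm Zsn by blast
  then have ZsG': "Zs = G" using ZsG by (simp add: mat_le_def vec_eq_iff order_antisym)
  have Zlim_G: "(\<lambda>k. Z k $ i $ j) \<longlonglongrightarrow> G $ i $ j" for i j using Zlim_e ZsG' by simp
  have Ge: "(G *v e) $ i \<ge> 1" for i by (rule sol_rowsum_ge[OF Gn Gs])
  show ?thesis
  proof (intro vec_tendstoI)
    fix i j
    define D where "D k = X k $ i $ j - Z k $ i $ j" for k
    define U where "U k = 1 - (\<Sum>l\<in>UNIV. Z k $ i $ l)" for k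
    have D0: "0 \<le> D k" for k using inv[of k] by (simp add: D_def mat_le_def)
    have DU: "D k \<le> U k" for k
    proof -
      have rs: "(\<Sum>l\<in>UNIV. X k $ i $ l) = 1"
        using Xst[of k] unfolding stochastic_def by (simp add: vec_eq_iff mv_comp)
      have "D k \<le> (\<Sum>l\<in>UNIV. X k $ i $ l - Z k $ i $ l)"
        unfolding D_def by (rule member_le_sum) (use inv in \<open>auto simp: mat_le_def\<close>)
      also have "\<dots> = U k" unfolding U_def using rs by (simp add: sum_subtractf)
      finally show ?thesis .
    qed
    have Ulim: "U \<longlonglongrightarrow> 1 - (G *v e) $ i"
    proof -
      have "(\<lambda>k. \<Sum>l\<in>UNIV. Z k $ i $ l) \<longlonglongrightarrow> (\<Sum>l\<in>UNIV. G $ i $ l)"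
        by (intro tendsto_sum Zlim_G)
      then show ?thesis unfolding U_def by (simp add: mv_comp tendsto_diff)
    qed
    have "0 \<le> 1 - (G *v e) $ i"
      by (rule LIMSEQ_le_const[OF Ulim]) (use D0 DU order_trans in blast)
    then have "1 - (G *v e) $ i = 0" using Ge[of i] by simp
    then have "U \<longlonglongrightarrow> 0" using Ulim by simp
    then have "D \<longlonglongrightarrow> 0"
      by (intro real_tendsto_sandwich[of "\<lambda>k. 0" D sequentially U]) (use D0 DU in auto)
    then have "(\<lambda>k. D k + Z k $ i $ j) \<longlonglongrightarrow> 0 + G $ i $ j"
      by (intro tendsto_add Zlim_G)
    then show "(\<lambda>k. X k $ i $ j) \<longlonglongrightarrow> G $ i $ j" by (simp add: D_def)
  qed
qed

end

theorem proposition2: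
  fixes A :: "int \<Rightarrow> real^'n^'n"
    and G :: "real^'n^'n"
    and X Y :: "nat \<Rightarrow> real^'n^'n"
  assumes nonneg: "\<And>i. i \<ge> -1 \<Longrightarrow> nonneg_mat (A i)"
    and summ: "summable (\<lambda>k. A (int k - 1))"
    and irr: "irreducible_mat (\<Sum>k. A (int k - 1))"
    and stoch: "stochastic (\<Sum>k. A (int k - 1))"
    and summ_drift: "summable (\<lambda>k. of_int (int k - 1) *\<^sub>R A (int k - 1))"
    and drift: "\<forall>v :: real^'n. (\<forall>i. v $ i > 0) \<and> v v* (\<Sum>k. A (int k - 1)) = v
                  \<and> sum (\<lambda>i. v $ i) UNIV = 1
                \<longrightarrow> v \<bullet> ((\<Sum>k. of_int (int k - 1) *\<^sub>R A (int k - 1)) *v (\<chi> i. 1)) < 0"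
    and Gmin: "minimal_nonneg_solution A G"
    and X0: "stochastic (X 0)"
    and Ydef: "\<And>k. (mat 1 - A 0) ** Y k
                 = A (-1) + (\<Sum>j. A (int j + 1) ** mpow (X k) (j + 2))"
    and Xdef: "\<And>k. X (Suc k) = Y k + matrix_inv (mat 1 - A 0) ** A 1
                                   ** (Y k ** Y k - X k ** X k)"
  shows "X \<longlonglongrightarrow> G"
proof -
  interpret mg1 A
    using nonneg summ irr stoch summ_drift drift by (rule mg1.intro)
  show ?thesis by (rule main_conv[OF Gmin X0 Ydef Xdef])
qed

end
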